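(* Consider Algorithm iR2N (described in the context) and suppose (A4) and (A6) hold. For each iteration $k$ with nonzero denominator, let $$\rho_k=\frac{f(x_k)+h(x_k)-f(x_k+s_k)-h(x_k+s_k)}{\varphi(0;x_k)+\psi(0;x_k)-\varphi(s_k;x_k)-\psi(s_k;x_k)},$$ and define $$\eta_1=\hat\eta_1-\frac{4\kappa_f\theta_1\theta_2^2}{(1-\theta_1)\sigma_{\min}},\qquad \eta_2=\hat\eta_2-\frac{4\kappa_f\theta_1\theta_2^2}{(1-\theta_1)\sigma_{\min}}.$$ Then $\eta_1>0$, $\eta_2>0$, and for every $k$: $\hat\rho_k\ge\hat\eta_1\Rightarrow\rho_k\ge\eta_1$, and $\hat\rho_k\ge\hat\eta_2\Rightarrow\rho_k\ge\eta_2$.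
   Context: Setting. $f:\mathbb{R}^n\to\mathbb{R}$ is continuously differentiable, $h:\mathbb{R}^n\to\mathbb{R}\cup\{+\infty\}$ is proper and lower semicontinuous; the problem is $\min_x f(x)+h(x)$. $\|\cdot\|$ is the Euclidean norm (spectral norm for matrices). For each $x$, approximations $\hat f(x)\in\mathbb{R}$ of $f(x)$ and $\hat\nabla f(x)\in\mathbb{R}^n$ of $\nabla f(x)$ are available. For each $x$, $\psi(\cdot;x):\mathbb{R}^n\to\mathbb{R}\cup\{+\infty\}$ is proper, lsc, satisfies $\psi(0;x)=h(x)$ and $\partial\psi(0;x)\subseteq\partial h(x)$ ($\partial$ = limiting subdifferential), and is uniformly prox-bounded: there is $\lambda>0$ such that for every $x$ and every $0<\lambda'<\lambda$, $w\mapsto\psi(w;x)+\tfrac{1}{2\lambda'}\|w\|^2$ is bounded below. Models: $\varphi_{\mathrm{cp}}(s;x)=\hat f(x)+\hat\nabla f(x)^Ts$; $m_{\mathrm{cp}}(s;x,\nu^{-1})=\varphi_{\mathrm{cp}}(s;x)+\tfrac12\nu^{-1}\|s\|^2+\psi(s;x)$; for a symmetric $B(x)\in\mathbb{R}^{n\times n}$, $\varphi(s;x)=\hat f(x)+\hat\nabla f(x)^Ts+\tfrac12 s^TB(x)s$ and $m(s;x,\sigma)=\varphi(s;x)+\tfrac12\sigma\|s\|^2+\psi(s;x)$. Algorithm iR2N. Constants: $\kappa_f,\kappa_\nabla>0$, $0<\gamma_3\le 1<\gamma_1\le\gamma_2$, $0<\hat\eta_1\le\hat\eta_2<1$, $0<\theta_1<1<\theta_2$,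 $\sigma_{\min}>4\kappa_f\theta_1\theta_2^2/(\hat\eta_1(1-\theta_1))$, $\sigma_0\ge\sigma_{\min}$, $x_0\in\mathbb{R}^n$. At iteration $k=0,1,\dots$: choose symmetric $B_k=B(x_k)$; set $\nu_k=\theta_1/(\|B_k\|+\sigma_k)$; compute $\hat s_{k,\mathrm{cp}}$ with $m_{\mathrm{cp}}(\hat s_{k,\mathrm{cp}};x_k,\nu_k^{-1})\le m_{\mathrm{cp}}(0;x_k,\nu_k^{-1})$ (an approximate minimizer of $m_{\mathrm{cp}}(\cdot;x_k,\nu_k^{-1})$ obtained by a descent procedure from $s=0$) and set $\hat\xi_{k,\mathrm{cp}}=(\varphi_{\mathrm{cp}}+\psi)(0;x_k)-(\varphi_{\mathrm{cp}}+\psi)(\hat s_{k,\mathrm{cp}};x_k)$; compute $s_k$ with $m(s_k;x_k,\sigma_k)\le m(\hat s_{k,\mathrm{cp}};x_k,\sigma_k)$; if $\|s_k\|>\theta_2\|\hat s_{k,\mathrm{cp}}\|$, reset $s_k=\hat s_{k,\mathrm{cp}}$ (these computations are repeated with refined $\hat f,\hat\nabla f$ until (A6) holds). Compute $$\hat\rho_k=\frac{\hat f(x_k)+h(x_k)-\hat f(x_k+s_k)-h(x_k+s_k)}{\varphi(0;x_k)+\psi(0;x_k)-\varphi(s_k;x_k)-\psi(s_k;x_k)},$$ where $\varphi(\cdot;x_k)$ uses $B_k$. If $\hat\rho_k\ge\hat\eta_1$ (successful) set $x_{k+1}=x_k+s_k$, else $x_{k+1}=x_k$. Choose $\sigma_{k+1}\in[\gamma_3\sigma_k,\sigma_k]$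 if $\hat\rho_k\ge\hat\eta_2$ (very successful), $\sigma_{k+1}\in[\sigma_k,\gamma_1\sigma_k]$ if $\hat\eta_1\le\hat\rho_k<\hat\eta_2$, $\sigma_{k+1}\in[\gamma_1\sigma_k,\gamma_2\sigma_k]$ if $\hat\rho_k<\hat\eta_1$; then reset $\sigma_{k+1}=\max(\sigma_{k+1},\sigma_{\min})$. Assumptions. (A4) For all $k$, $\varphi(0;x_k)+\psi(0;x_k)-(\varphi(s_k;x_k)+\psi(s_k;x_k))\ge(1-\theta_1)\hat\xi_{k,\mathrm{cp}}$. (A6) For all $k$: $|f(x_k)-\hat f(x_k)|\le\kappa_f\|s_k\|^2$, $|f(x_k+s_k)-\hat f(x_k+s_k)|\le\kappa_f\|s_k\|^2$, $\|\nabla f(x_k)-\hat\nabla f(x_k)\|\le\kappa_\nabla\|s_k\|$. *)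

theory Defs
  imports "HOL-Analysis.Analysis"
begin

definition lsc_fun :: "('a::topological_space \<Rightarrow> ereal) \<Rightarrow> bool" where
  "lsc_fun g \<longleftrightarrow> (\<forall>x. g x \<le> Liminf (at x) g)"

definition proper_fun :: "('a \<Rightarrow> ereal) \<Rightarrow> bool" where
  "proper_fun g \<longleftrightarrow> (\<forall>x. g x \<noteq> -\<infinity>) \<and> (\<exists>x. g x \<noteq> \<infinity>)"

definition frechet_subdiff :: "('a::real_inner \<Rightarrow> ereal) \<Rightarrow> 'a \<Rightarrow> 'a set" where
  "frechet_subdiff g x = {v. \<bar>g x\<bar> \<noteq> \<infinity> \<and>
     (\<forall>e>0. eventually (\<lambda>y. g y \<ge> g x + ereal (v \<bullet> (y - x) - e * norm (y - x))) (at x))}"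

definition limiting_subdiff :: "('a::real_inner \<Rightarrow> ereal) \<Rightarrow> 'a \<Rightarrow> 'a set" where
  "limiting_subdiff g x = {v. \<exists>xs vs. xs \<longlonglongrightarrow> x \<and> (\<lambda>j. g (xs j)) \<longlonglongrightarrow> g x \<and>
     (\<forall>j. vs j \<in> frechet_subdiff g (xs j)) \<and> vs \<longlonglongrightarrow> v}"

text \<open>Uniform prox-boundedness of the family psi(.;x) (psi x w stands for psi(w;x)).\<close>
definition unif_prox_bounded :: "('a \<Rightarrow> 'a::real_normed_vector \<Rightarrow> ereal) \<Rightarrow> bool" where
  "unif_prox_bounded psi \<longleftrightarrow> (\<exists>lam>0. \<forall>x lam'. 0 < lam' \<and> lam' < lam \<longrightarrow>
      bdd_below (range (\<lambda>w. psi x w + ereal (norm w ^ 2 / (2 * lam')))))"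

end

theory Submission
  imports Defs
begin

theorem lemma3p4:
  fixes f :: "real ^ 'n \<Rightarrow> real" and gradf :: "real ^ 'n \<Rightarrow> real ^ 'n"
    and h :: "real ^ 'n \<Rightarrow> ereal"
    and psi :: "real ^ 'n \<Rightarrow> real ^ 'n \<Rightarrow> ereal"
    and Bf :: "real ^ 'n \<Rightarrow> real ^ 'n ^ 'n"
    and fh :: "nat \<Rightarrow> real ^ 'n \<Rightarrow> real" and gh :: "nat \<Rightarrow> real ^ 'n"
    and x s scp :: "nat \<Rightarrow> real ^ 'n" and sigma :: "nat \<Rightarrow> real"
    and kf kg gam1 gam2 gam3 eh1 eh2 th1 th2 smin :: real
  assumes f_C1: "\<forall>y. (f has_derivative (\<lambda>v. gradf y \<bullet> v)) (at y)" "continuous_on UNIV gradf"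
    and h_proper: "proper_fun h" and h_lsc: "lsc_fun h"
    and psi_proper: "\<forall>y. proper_fun (psi y)" and psi_lsc: "\<forall>y. lsc_fun (psi y)"
    and psi_zero: "\<forall>y. psi y 0 = h y"
    and psi_subdiff: "\<forall>y. limiting_subdiff (psi y) 0 \<subseteq> limiting_subdiff h y"
    and psi_prox: "unif_prox_bounded psi"
    and B_sym: "\<forall>y. transpose (Bf y) = Bf y"
    and params: "kf > 0" "kg > 0" "0 < gam3" "gam3 \<le> 1" "1 < gam1" "gam1 \<le> gam2"
      "0 < eh1" "eh1 \<le> eh2" "eh2 < 1" "0 < th1" "th1 < 1" "1 < th2"
    and smin: "smin > 4 * kf * th1 * th2 ^ 2 / (eh1 * (1 - th1))"
    and sigma0: "sigma 0 \<ge> smin"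
    and cp_decrease: "\<forall>k. ereal (fh k (x k) + gh k \<bullet> scp k
            + (onorm (\<lambda>v. Bf (x k) *v v) + sigma k) / th1 * norm (scp k) ^ 2 / 2) + psi (x k) (scp k)
          \<le> ereal (fh k (x k)) + psi (x k) 0"
    and step: "\<forall>k. (ereal (fh k (x k) + gh k \<bullet> s k + (s k \<bullet> (Bf (x k) *v s k)) / 2
                 + sigma k * norm (s k) ^ 2 / 2) + psi (x k) (s k)
               \<le> ereal (fh k (x k) + gh k \<bullet> scp k + (scp k \<bullet> (Bf (x k) *v scp k)) / 2
                 + sigma k * norm (scp k) ^ 2 / 2) + psi (x k) (scp k)
             \<and> norm (s k) \<le> th2 * norm (scp k))
          \<or> s k = scp k"
    and x_update: "\<forall>k. x (Suc k) =
          (if ((ereal (fh k (x k)) + h (x k)) - (ereal (fh k (x k + s k)) + h (x k + s k)))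
              / ((ereal (fh k (x k)) + psi (x k) 0)
                 - (ereal (fh k (x k) + gh k \<bullet> s k + (s k \<bullet> (Bf (x k) *v s k)) / 2) + psi (x k) (s k)))
              \<ge> ereal eh1
           then x k + s k else x k)"
    and sigma_update: "\<forall>k. \<exists>t. sigma (Suc k) = max t smin \<and>
          (let rh = ((ereal (fh k (x k)) + h (x k)) - (ereal (fh k (x k + s k)) + h (x k + s k)))
              / ((ereal (fh k (x k)) + psi (x k) 0)
                 - (ereal (fh k (x k) + gh k \<bullet> s k + (s k \<bullet> (Bf (x k) *v s k)) / 2) + psi (x k) (s k)))
           in (rh \<ge> ereal eh2 \<longrightarrow> gam3 * sigma k \<le> t \<and> t \<le> sigma k)
            \<and> (ereal eh1 \<le> rh \<and> rh < ereal eh2 \<longrightarrow> sigma k \<le> t \<and> t \<le> gam1 * sigma k)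
            \<and> (rh < ereal eh1 \<longrightarrow> gam1 * sigma k \<le> t \<and> t \<le> gam2 * sigma k))"
    and A4: "\<forall>k. (ereal (fh k (x k)) + psi (x k) 0)
                 - (ereal (fh k (x k) + gh k \<bullet> s k + (s k \<bullet> (Bf (x k) *v s k)) / 2) + psi (x k) (s k))
               \<ge> ereal (1 - th1) *
                 ((ereal (fh k (x k)) + psi (x k) 0)
                  - (ereal (fh k (x k) + gh k \<bullet> scp k) + psi (x k) (scp k)))"
    and A6: "\<forall>k. \<bar>f (x k) - fh k (x k)\<bar> \<le> kf * norm (s k) ^ 2
              \<and> \<bar>f (x k + s k) - fh k (x k + s k)\<bar> \<le> kf * norm (s k) ^ 2
              \<and> norm (gradf (x k) - gh k) \<le> kg * norm (s k)"
  shows "eh1 - 4 * kf * th1 * th2 ^ 2 / ((1 - th1) * smin) > 0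
       \<and> eh2 - 4 * kf * th1 * th2 ^ 2 / ((1 - th1) * smin) > 0
       \<and> (\<forall>k. h (x k) \<noteq> \<infinity> \<and> h (x k + s k) \<noteq> \<infinity> \<and>
              (ereal (fh k (x k)) + psi (x k) 0)
                 - (ereal (fh k (x k) + gh k \<bullet> s k + (s k \<bullet> (Bf (x k) *v s k)) / 2) + psi (x k) (s k)) \<noteq> 0
            \<longrightarrow>
            (let rh = ((ereal (fh k (x k)) + h (x k)) - (ereal (fh k (x k + s k)) + h (x k + s k)))
                 / ((ereal (fh k (x k)) + psi (x k) 0)
                    - (ereal (fh k (x k) + gh k \<bullet> s k + (s k \<bullet> (Bf (x k) *v s k)) / 2) + psi (x k) (s k)));
                 r = (f (x k) + real_of_ereal (h (x k)) - f (x k + s k) - real_of_ereal (h (x k + s k)))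
                 / real_of_ereal ((ereal (fh k (x k)) + psi (x k) 0)
                    - (ereal (fh k (x k) + gh k \<bullet> s k + (s k \<bullet> (Bf (x k) *v s k)) / 2) + psi (x k) (s k)))
             in (rh \<ge> ereal eh1 \<longrightarrow> r \<ge> eh1 - 4 * kf * th1 * th2 ^ 2 / ((1 - th1) * smin))
              \<and> (rh \<ge> ereal eh2 \<longrightarrow> r \<ge> eh2 - 4 * kf * th1 * th2 ^ 2 / ((1 - th1) * smin))))"
proof -
  define e where "e = 4 * kf * th1 * th2 ^ 2 / ((1 - th1) * smin)"
  have smin_pos: "smin > 0"
  proof -
    have "4 * kf * th1 * th2 ^ 2 / (eh1 * (1 - th1)) > 0" using params by simp
    thus ?thesis using smin by linarith
  qed
  have e1: "eh1 - e > 0"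
  proof -
    have "4 * kf * th1 * th2 ^ 2 < smin * (eh1 * (1 - th1))"
      using smin params by (simp add: divide_less_eq mult.commute)
    hence "4 * kf * th1 * th2 ^ 2 / ((1 - th1) * smin) < eh1"
      using params smin_pos by (simp add: divide_less_eq algebra_simps)
    thus ?thesis unfolding e_def by simp
  qed
  have sig: "sigma k \<ge> smin" for k
  proof (cases k)
    case 0 thus ?thesis using sigma0 by simp
  next
    case (Suc j)
    from sigma_update obtain t where "sigma (Suc j) = max t smin" by blast
    thus ?thesis using Suc by simp
  qed
  have main: "(let rh = ((ereal (fh k (x k)) + h (x k)) - (ereal (fh k (x k + s k)) + h (x k + s k)))
                 / ((ereal (fh k (x k)) + psi (x k) 0)
                    - (ereal (fh k (x k) + gh k \<bullet> s k + (s k \<bullet> (Bf (x k) *v s k)) / 2) + psi (x k) (s k)));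
                 r = (f (x k) + real_of_ereal (h (x k)) - f (x k + s k) - real_of_ereal (h (x k + s k)))
                 / real_of_ereal ((ereal (fh k (x k)) + psi (x k) 0)
                    - (ereal (fh k (x k) + gh k \<bullet> s k + (s k \<bullet> (Bf (x k) *v s k)) / 2) + psi (x k) (s k)))
             in r \<ge> real_of_ereal rh - e \<and> rh \<noteq> \<infinity> \<and> rh \<noteq> -\<infinity>)"
    if hx: "h (x k) \<noteq> \<infinity>" and hxs: "h (x k + s k) \<noteq> \<infinity>"
      and Dnz: "(ereal (fh k (x k)) + psi (x k) 0)
                 - (ereal (fh k (x k) + gh k \<bullet> s k + (s k \<bullet> (Bf (x k) *v s k)) / 2) + psi (x k) (s k)) \<noteq> 0"
    for k
  proof -
    obtain a where a: "h (x k) = ereal a" using hx h_proper unfolding proper_fun_def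
      by (cases "h (x k)") auto
    obtain b where b: "h (x k + s k) = ereal b" using hxs h_proper unfolding proper_fun_def
      by (cases "h (x k + s k)") auto
    have p0: "psi (x k) 0 = ereal a" using psi_zero a by simp
    define nb where "nb = onorm (\<lambda>v. Bf (x k) *v v)"
    have nb0: "nb \<ge> 0" unfolding nb_def by (rule onorm_pos_le) simp
    have cp: "ereal (fh k (x k) + gh k \<bullet> scp k
            + (nb + sigma k) / th1 * norm (scp k) ^ 2 / 2) + psi (x k) (scp k)
          \<le> ereal (fh k (x k)) + ereal a" using spec[OF cp_decrease, of k] p0 unfolding nb_def by simp
    obtain c where c: "psi (x k) (scp k) = ereal c"
      using cp psi_proper unfolding proper_fun_def
      by (cases "psi (x k) (scp k)") auto
    have cpr: "fh k (x k) + gh k \<bullet> scp k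
            + (nb + sigma k) / th1 * norm (scp k) ^ 2 / 2 + c \<le> fh k (x k) + a"
      using cp c by simp
    have A4k: "(ereal (fh k (x k)) + ereal a)
                 - (ereal (fh k (x k) + gh k \<bullet> s k + (s k \<bullet> (Bf (x k) *v s k)) / 2) + psi (x k) (s k))
               \<ge> ereal ((1 - th1) * ((fh k (x k) + a) - (fh k (x k) + gh k \<bullet> scp k + c)))"
      using spec[OF A4, of k] p0 c by simp
    obtain d where d: "psi (x k) (s k) = ereal d"
      using A4k psi_proper unfolding proper_fun_def
      by (cases "psi (x k) (s k)") auto
    define D where "D = fh k (x k) + a - (fh k (x k) + gh k \<bullet> s k + (s k \<bullet> (Bf (x k) *v s k)) / 2 + d)"
    have Deq: "(ereal (fh k (x k)) + psi (x k) 0)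
                 - (ereal (fh k (x k) + gh k \<bullet> s k + (s k \<bullet> (Bf (x k) *v s k)) / 2) + psi (x k) (s k)) = ereal D"
      using p0 d unfolding D_def by simp
    have DA4: "D \<ge> (1 - th1) * ((fh k (x k) + a) - (fh k (x k) + gh k \<bullet> scp k + c))"
      using A4k d unfolding D_def by simp
    have Dnz': "D \<noteq> 0" using Dnz Deq by simp
    have xi: "(fh k (x k) + a) - (fh k (x k) + gh k \<bullet> scp k + c) \<ge> sigma k / th1 * norm (scp k) ^ 2 / 2"
    proof -
      have "sigma k / th1 * norm (scp k) ^ 2 / 2 \<le> (nb + sigma k) / th1 * norm (scp k) ^ 2 / 2"
        using nb0 params by (intro divide_right_mono mult_right_mono divide_right_mono) auto
      thus ?thesis using cpr by linarith
    qed
    have ns: "norm (s k) \<le> th2 * norm (scp k)"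
    proof -
      have "norm (scp k) \<le> th2 * norm (scp k)" using params by (simp add: mult_le_cancel_right1)
      thus ?thesis using spec[OF step, of k] by auto
    qed
    have ns2: "norm (s k) ^ 2 \<le> th2 ^ 2 * norm (scp k) ^ 2"
      using ns by (metis norm_ge_zero power_mono power_mult_distrib)
    define X where "X = (fh k (x k) + a) - (fh k (x k) + gh k \<bullet> scp k + c)"
    have Xb: "X \<ge> sigma k / th1 * norm (scp k) ^ 2 / 2" using xi X_def by simp
    have X0: "X \<ge> 0" using Xb sig[of k] smin_pos params proof -
      have "sigma k / th1 * norm (scp k) ^ 2 / 2 \<ge> 0" using sig[of k] smin_pos params by simp
      thus ?thesis using Xb by linarith
    qed
    have DX: "D \<ge> (1 - th1) * X" using DA4 X_def by simp
    have "(1 - th1) * X \<ge> 0" using X0 params by simp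
    hence Dpos: "D > 0" using DX Dnz' by linarith
    have key: "2 * kf * norm (s k) ^ 2 \<le> e * D"
    proof -
      have ep: "e \<ge> 0" unfolding e_def using params smin_pos by simp
      have "e * D \<ge> e * ((1 - th1) * X)" using DX ep by (simp add: mult_left_mono)
      moreover have "e * ((1 - th1) * X) \<ge> e * ((1 - th1) * (sigma k / th1 * norm (scp k) ^ 2 / 2))"
        using Xb ep params by (intro mult_left_mono) auto
      moreover have "e * ((1 - th1) * (sigma k / th1 * norm (scp k) ^ 2 / 2))
          = 2 * kf * th2 ^ 2 * norm (scp k) ^ 2 * (sigma k / smin)"
        unfolding e_def using params smin_pos by (simp add: field_simps)
      moreover have "sigma k / smin \<ge> 1" using sig[of k] smin_pos by simp
      moreover have "2 * kf * th2 ^ 2 * norm (scp k) ^ 2 \<ge> 2 * kf * norm (s k) ^ 2"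
        using ns2 params by (simp add: mult.assoc)
      moreover have "2 * kf * th2 ^ 2 * norm (scp k) ^ 2 * (sigma k / smin) \<ge> 2 * kf * th2 ^ 2 * norm (scp k) ^ 2"
      proof -
        have "2 * kf * th2 ^ 2 * norm (scp k) ^ 2 \<ge> 0" using params by simp
        thus ?thesis using \<open>sigma k / smin \<ge> 1\<close> mult_left_mono[of 1 "sigma k / smin" "2 * kf * th2 ^ 2 * norm (scp k) ^ 2"] by simp
      qed
      ultimately show ?thesis by linarith
    qed
    define N where "N = fh k (x k) + a - (fh k (x k + s k) + b)"
    have Neq: "(ereal (fh k (x k)) + h (x k)) - (ereal (fh k (x k + s k)) + h (x k + s k)) = ereal N"
      using a b unfolding N_def by simp
    have errs: "\<bar>f (x k) - fh k (x k)\<bar> \<le> kf * norm (s k) ^ 2"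
         "\<bar>f (x k + s k) - fh k (x k + s k)\<bar> \<le> kf * norm (s k) ^ 2" using A6 by auto
    have "(f (x k) + a - f (x k + s k) - b) / D - N / D
        = ((f (x k) - fh k (x k)) - (f (x k + s k) - fh k (x k + s k))) / D"
      unfolding N_def using Dpos by (simp add: field_simps)
    also have "\<dots> \<ge> - (2 * kf * norm (s k) ^ 2) / D"
      using errs Dpos by (intro divide_right_mono) auto
    also have "- (2 * kf * norm (s k) ^ 2) / D \<ge> - e"
      using key Dpos by (simp add: divide_le_eq)
    finally have fin: "(f (x k) + a - f (x k + s k) - b) / D \<ge> N / D - e" by simp
    show ?thesis using fin a b Neq Deq Dpos by (simp add: Let_def)
  qed
  show ?thesis
  proof (intro conjI allI impI)
    show "eh1 - 4 * kf * th1 * th2 ^ 2 / ((1 - th1) * smin) > 0" using e1 e_def by simp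
    show "eh2 - 4 * kf * th1 * th2 ^ 2 / ((1 - th1) * smin) > 0" using e1 e_def params by simp
  next
    fix k
    assume H: "h (x k) \<noteq> \<infinity> \<and> h (x k + s k) \<noteq> \<infinity> \<and>
              (ereal (fh k (x k)) + psi (x k) 0)
                 - (ereal (fh k (x k) + gh k \<bullet> s k + (s k \<bullet> (Bf (x k) *v s k)) / 2) + psi (x k) (s k)) \<noteq> 0"
    from main[of k] H show "let rh = ((ereal (fh k (x k)) + h (x k)) - (ereal (fh k (x k + s k)) + h (x k + s k)))
                 / ((ereal (fh k (x k)) + psi (x k) 0)
                    - (ereal (fh k (x k) + gh k \<bullet> s k + (s k \<bullet> (Bf (x k) *v s k)) / 2) + psi (x k) (s k)));
                 r = (f (x k) + real_of_ereal (h (x k)) - f (x k + s k) - real_of_ereal (h (x k + s k)))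
                 / real_of_ereal ((ereal (fh k (x k)) + psi (x k) 0)
                    - (ereal (fh k (x k) + gh k \<bullet> s k + (s k \<bullet> (Bf (x k) *v s k)) / 2) + psi (x k) (s k)))
             in (rh \<ge> ereal eh1 \<longrightarrow> r \<ge> eh1 - 4 * kf * th1 * th2 ^ 2 / ((1 - th1) * smin))
              \<and> (rh \<ge> ereal eh2 \<longrightarrow> r \<ge> eh2 - 4 * kf * th1 * th2 ^ 2 / ((1 - th1) * smin))"
    proof -
      define RH where "RH = ((ereal (fh k (x k)) + h (x k)) - (ereal (fh k (x k + s k)) + h (x k + s k)))
                 / ((ereal (fh k (x k)) + psi (x k) 0)
                    - (ereal (fh k (x k) + gh k \<bullet> s k + (s k \<bullet> (Bf (x k) *v s k)) / 2) + psi (x k) (s k)))"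
      define R where "R = (f (x k) + real_of_ereal (h (x k)) - f (x k + s k) - real_of_ereal (h (x k + s k)))
                 / real_of_ereal ((ereal (fh k (x k)) + psi (x k) 0)
                    - (ereal (fh k (x k) + gh k \<bullet> s k + (s k \<bullet> (Bf (x k) *v s k)) / 2) + psi (x k) (s k)))"
      have M: "R \<ge> real_of_ereal RH - e \<and> RH \<noteq> \<infinity> \<and> RH \<noteq> -\<infinity>"
        using main[of k] H unfolding RH_def R_def Let_def by blast
      then obtain q where q: "RH = ereal q" by (cases RH) auto
      have G: "(RH \<ge> ereal eh1 \<longrightarrow> R \<ge> eh1 - e) \<and> (RH \<ge> ereal eh2 \<longrightarrow> R \<ge> eh2 - e)"
        using M q by auto
      show ?thesis using G unfolding RH_def R_def e_def Let_def by blast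
    qed
  qed
qed

end
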